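(* Let $\mathcal{G}_1$ be an arbitrary two-terminal series-parallel graph with source $s_1$, sink $t_1$ and effective resistance $\rho^{\mathrm{eff}}_{s_1,t_1}$ between them. Let $\mathcal{G}_2$ be a 1-path (a single edge) with source $s_2$, sink $t_2$ and effective resistance $\rho^{\mathrm{eff}}_{s_2,t_2}$. For each $i$, consider the leader-follower system on $\mathcal{G}_i$ with the source $s_i$ grounded and control matrix $B_i=e_{t_i}$. Let $\mathcal{H}_2^i$ denote its $\mathcal{H}_2$ norm. If $\rho^{\mathrm{eff}}_{s_1,t_1}=\rho^{\mathrm{eff}}_{s_2,t_2}$, then $(\mathcal{H}_2^1)^2=(\mathcal{H}_2^2)^2$.
   Context: Graphs are undirected with positive edge weights (conductances). Effective resistance is computed in the corresponding electrical network. Two-terminal series-parallel (TTSP) graphs are defined recursively. A single edge with designated source and sink (a 1-path) is TTSP. If $\mathcal{G}_1,\mathcal{G}_2$ are TTSP with sources $s_1,s_2$ and sinks $t_1,t_2$, then: - their series join (identify $t_1$ with $s_2$; new source $s_1$, new sink $t_2$) is TTSP; - their parallel join (identify $s_1$ with $s_2$ and $t_1$ with $t_2$) is TTSP. Multiple edges are allowed. For a TTSP graph with source $s$ grounded (state fixed at $0$), let $L_D$ be the Dirichlet Laplacian: the weighted Laplacian with the row and column of $s$ deleted. The system is $\dot x=-L_Dx+Bu$, $y=x$. Its squared $\mathcal{H}_2$ norm is $-\tfrac12\mathrm{Tr}\big(B^T(-L_D)^{-1}B\big)=\tfrac12\mathrm{Tr}\big(B^TL_D^{-1}B\big)$. 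*)

theory Defs
  imports "Jordan_Normal_Form.Gauss_Jordan_Elimination" "HOL-Library.Multiset"
begin

text \<open>Weighted undirected multigraphs: a finite vertex set V of naturals and a multiset
of edges (u, v, c) joining u and v with conductance c.\<close>

type_synonym wedge = "nat \<times> nat \<times> real"

text \<open>Two-terminal series-parallel graphs (V, E) with source s and sink t.
Vertex labels are concrete; the join operations require the two pieces to share
exactly the identified vertices.\<close>

inductive ttsp :: "nat set \<Rightarrow> wedge multiset \<Rightarrow> nat \<Rightarrow> nat \<Rightarrow> bool" where
  edge: "s \<noteq> t \<Longrightarrow> c > 0 \<Longrightarrow> ttsp {s, t} {#(s, t, c)#} s t"
| series: "ttsp V1 E1 s m \<Longrightarrow> ttsp V2 E2 m t \<Longrightarrow> V1 \<inter> V2 = {m}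
           \<Longrightarrow> ttsp (V1 \<union> V2) (E1 + E2) s t"
| parallel: "ttsp V1 E1 s t \<Longrightarrow> ttsp V2 E2 s t \<Longrightarrow> V1 \<inter> V2 = {s, t}
           \<Longrightarrow> ttsp (V1 \<union> V2) (E1 + E2) s t"

definition lap :: "wedge multiset \<Rightarrow> nat \<Rightarrow> nat \<Rightarrow> real" where
  "lap E u v =
    (if u = v then (\<Sum>(a, b, c) \<in># E. if (a = u \<or> b = u) \<and> a \<noteq> b then c else 0)
     else - (\<Sum>(a, b, c) \<in># E. if (a = u \<and> b = v) \<or> (a = v \<and> b = u) then c else 0))"

text \<open>Effective resistance between s and t in the electrical network: inject unit current
at t and extract it at s; the potential p (zero off V, grounded p s = 0) satisfies
Kirchhoff's current law (L p)(u) = [u = t] - [u = s] at every vertex u, and the effective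
resistance is the potential difference p t - p s.\<close>
definition eff_res :: "nat set \<Rightarrow> wedge multiset \<Rightarrow> nat \<Rightarrow> nat \<Rightarrow> real" where
  "eff_res V E s t =
    (let p = (THE p. (\<forall>u. u \<notin> V \<longrightarrow> p u = 0) \<and> p s = 0 \<and>
                     (\<forall>u\<in>V. (\<Sum>v\<in>V. lap E u v * p v) =
                              (if u = t then 1 else 0) - (if u = s then 1 else 0)))
     in p t - p s)"

definition free_verts :: "nat set \<Rightarrow> nat \<Rightarrow> nat list" where
  "free_verts V s = sorted_list_of_set (V - {s})"

definition dirichlet_lap :: "nat set \<Rightarrow> wedge multiset \<Rightarrow> nat \<Rightarrow> real mat" where
  "dirichlet_lap V E s =
    (let vs = free_verts V s; m = length vs
     in mat m m (\<lambda>(i, j). lap E (vs ! i) (vs ! j)))"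

definition ctrl_vec :: "nat set \<Rightarrow> nat \<Rightarrow> nat \<Rightarrow> real mat" where
  "ctrl_vec V s t =
    (let vs = free_verts V s in mat (length vs) 1 (\<lambda>(i, j). if vs ! i = t then 1 else 0))"

definition mat_trace :: "real mat \<Rightarrow> real" where
  "mat_trace A = (\<Sum>i<dim_row A. A $$ (i, i))"

definition H2_sq :: "nat set \<Rightarrow> wedge multiset \<Rightarrow> nat \<Rightarrow> real mat \<Rightarrow> real" where
  "H2_sq V E s B =
    1 / 2 * mat_trace (transpose_mat B * the (mat_inverse (dirichlet_lap V E s)) * B)"

end

theory Submission imports Defs "Jordan_Normal_Form.Determinant" begin

lemma ttsp_basic:
  "ttsp V E s t \<Longrightarrow> finite V \<and> s \<in> V \<and> t \<in> V \<and> s \<noteq> t \<and>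
     (\<forall>e\<in>#E. fst e \<in> V \<and> fst (snd e) \<in> V \<and> fst e \<noteq> fst (snd e) \<and> snd (snd e) > 0)"
proof (induction rule: ttsp.induct)
  case (edge s t c) then show ?case by auto
next
  case (series V1 E1 s m V2 E2 t)
  have "s \<noteq> t" using series.IH series.hyps(3) by (metis IntI singletonD)
  then show ?case using series.IH by auto
next
  case (parallel V1 E1 s t V2 E2) then show ?case by auto
qed

lemma ttsp_const:
  "ttsp V E s t \<Longrightarrow> (\<forall>e\<in>#E. d (fst e) = d (fst (snd e))) \<Longrightarrow> \<forall>u\<in>V. d u = d s"
proof (induction rule: ttsp.induct)
  case (edge s t c) then show ?case by auto
next
  case (series V1 E1 s m V2 E2 t)
  have m: "m \<in> V1" using series.hyps(3) by auto
  have "\<forall>u\<in>V1. d u = d s" using series.IH(1) series.prems by auto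
  moreover have "\<forall>u\<in>V2. d u = d m" using series.IH(2) series.prems by auto
  ultimately show ?case using m by auto
next
  case (parallel V1 E1 s t V2 E2)
  have "\<forall>u\<in>V1. d u = d s" using parallel.IH(1) parallel.prems by auto
  moreover have "\<forall>u\<in>V2. d u = d s" using parallel.IH(2) parallel.prems by auto
  ultimately show ?case by auto
qed

definition lap1 :: "wedge \<Rightarrow> nat \<Rightarrow> nat \<Rightarrow> real" where
  "lap1 e u v = (case e of (a, b, c) \<Rightarrow>
     (if u = v then (if (a = u \<or> b = u) \<and> a \<noteq> b then c else 0)
      else - (if (a = u \<and> b = v) \<or> (a = v \<and> b = u) then c else 0)))"

lemma lap_sum: "lap E u v = (\<Sum>e\<in>#E. lap1 e u v)"
  unfolding lap_def lap1_def
  by (induction E) (auto split: prod.splits)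

definition flow :: "(nat \<Rightarrow> real) \<Rightarrow> wedge \<Rightarrow> nat \<Rightarrow> real" where
  "flow d e u = (case e of (a, b, c) \<Rightarrow>
     (if u = a then c * (d a - d b) else if u = b then c * (d b - d a) else 0))"

lemma lap1_row:
  assumes "finite V" "a \<in> V" "b \<in> V" "a \<noteq> b"
  shows "(\<Sum>v\<in>V. lap1 (a, b, c) u v * d v) = flow d (a, b, c) u"
proof -
  have "\<And>v. lap1 (a, b, c) u v * d v =
     (if u = a \<and> v = a then c * d a else 0) + (if u = b \<and> v = b then c * d b else 0)
     - (if u = a \<and> v = b then c * d b else 0) - (if u = b \<and> v = a then c * d a else 0)"
    using assms(4) unfolding lap1_def by auto
  then have "(\<Sum>v\<in>V. lap1 (a, b, c) u v * d v) =
     (\<Sum>v\<in>V. (if u = a \<and> v = a then c * d a else 0)) + (\<Sum>v\<in>V. (if u = b \<and> v = b then c * d b else 0))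
     - (\<Sum>v\<in>V. (if u = a \<and> v = b then c * d b else 0)) - (\<Sum>v\<in>V. (if u = b \<and> v = a then c * d a else 0))"
    by (simp add: sum.distrib sum_subtractf)
  also have "\<dots> = flow d (a, b, c) u"
    using assms unfolding flow_def by (auto simp: algebra_simps)
  finally show ?thesis .
qed

definition lapf :: "nat set \<Rightarrow> wedge multiset \<Rightarrow> (nat \<Rightarrow> real) \<Rightarrow> nat \<Rightarrow> real" where
  "lapf V E d u = (\<Sum>v\<in>V. lap E u v * d v)"

lemma lapf_formula:
  assumes "finite V" "\<forall>e\<in>#E. fst e \<in> V \<and> fst (snd e) \<in> V \<and> fst e \<noteq> fst (snd e)"
  shows "lapf V E d u = (\<Sum>e\<in>#E. flow d e u)"
  using assms(2)
proof (induction E)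
  case empty then show ?case by (simp add: lapf_def lap_sum)
next
  case (add x E)
  obtain a b c where x: "x = (a, b, c)" by (cases x) auto
  have "lapf V (add_mset x E) d u = (\<Sum>v\<in>V. lap1 x u v * d v) + lapf V E d u"
    unfolding lapf_def lap_sum by (simp add: algebra_simps sum.distrib)
  also have "(\<Sum>v\<in>V. lap1 x u v * d v) = flow d x u"
    using add.prems assms(1) x lap1_row by auto
  finally show ?case using add by simp
qed

lemma flow_sum:
  assumes "finite V" "fst e \<in> V" "fst (snd e) \<in> V" "fst e \<noteq> fst (snd e)"
  shows "(\<Sum>u\<in>V. flow d e u) = 0"
    and "(\<Sum>u\<in>V. d u * flow d e u) = snd (snd e) * (d (fst e) - d (fst (snd e)))^2"
proof -
  obtain a b c where x: "e = (a, b, c)" by (cases e) auto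
  have h: "\<And>u. flow d e u = (if u = a then c * (d a - d b) else 0) + (if u = b then c * (d b - d a) else 0)"
    using assms x unfolding flow_def by auto
  show "(\<Sum>u\<in>V. flow d e u) = 0"
    unfolding h using assms x by (simp add: sum.distrib algebra_simps)
  have h2: "\<And>u. d u * flow d e u = (if u = a then d a * (c * (d a - d b)) else 0) + (if u = b then d b * (c * (d b - d a)) else 0)"
    using h by (simp add: algebra_simps)
  show "(\<Sum>u\<in>V. d u * flow d e u) = snd (snd e) * (d (fst e) - d (fst (snd e)))^2"
    unfolding h2 using assms x by (simp add: sum.distrib power2_eq_square algebra_simps)
qed

lemma sum_mset_swap_set:
  "(\<Sum>u\<in>V. \<Sum>e\<in>#E. f e u) = (\<Sum>e\<in>#E. \<Sum>u\<in>V. (f e u :: real))"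
  by (induction E) (auto simp: sum.distrib)

lemma lapf_total:
  assumes "finite V" "\<forall>e\<in>#E. fst e \<in> V \<and> fst (snd e) \<in> V \<and> fst e \<noteq> fst (snd e)"
  shows "(\<Sum>u\<in>V. lapf V E d u) = 0"
    and "(\<Sum>u\<in>V. d u * lapf V E d u) = (\<Sum>e\<in>#E. snd (snd e) * (d (fst e) - d (fst (snd e)))^2)"
proof -
  have eq: "\<And>u. lapf V E d u = (\<Sum>e\<in>#E. flow d e u)" using lapf_formula[OF assms] .
  have "(\<Sum>u\<in>V. lapf V E d u) = (\<Sum>e\<in>#E. (\<Sum>u\<in>V. flow d e u))"
    unfolding eq by (rule sum_mset_swap_set)
  also have "\<dots> = (\<Sum>e\<in>#E. 0)"
    using assms(2) by (intro arg_cong[where f=sum_mset] image_mset_cong flow_sum(1)[OF assms(1)]) auto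
  finally show "(\<Sum>u\<in>V. lapf V E d u) = 0" by simp
  have "(\<Sum>u\<in>V. d u * lapf V E d u) = (\<Sum>e\<in>#E. (\<Sum>u\<in>V. d u * flow d e u))"
    unfolding eq sum_mset_distrib_left by (rule sum_mset_swap_set)
  also have "\<dots> = (\<Sum>e\<in>#E. snd (snd e) * (d (fst e) - d (fst (snd e)))^2)"
    using assms(2) by (intro arg_cong[where f=sum_mset] image_mset_cong flow_sum(2)[OF assms(1)]) auto
  finally show "(\<Sum>u\<in>V. d u * lapf V E d u) = (\<Sum>e\<in>#E. snd (snd e) * (d (fst e) - d (fst (snd e)))^2)" .
qed

lemma smn: "(\<forall>e\<in>#E. (f e::real) \<ge> 0) \<Longrightarrow> (\<Sum>e\<in>#E. f e) \<ge> 0"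
proof (induction E)
  case empty then show ?case by simp
next
  case (add x E)
  then have "f x \<ge> 0" "(\<Sum>e\<in>#E. f e) \<ge> 0" by simp_all
  then show ?case by simp
qed

lemma sum_mset_nonneg_zero:
  assumes "\<forall>e\<in>#E. (f e :: real) \<ge> 0" "(\<Sum>e\<in>#E. f e) = 0"
  shows "\<forall>e\<in>#E. f e = 0"
  using assms
proof (induction E)
  case empty then show ?case by simp
next
  case (add x E)
  have p1: "f x \<ge> 0" "\<forall>e\<in>#E. f e \<ge> 0" using add.prems(1) by simp_all
  have "(\<Sum>e\<in>#E. f e) \<ge> 0" using smn[OF p1(2)] .
  moreover have "f x + (\<Sum>e\<in>#E. f e) = 0" using add.prems(2) by simp
  ultimately have "f x = 0" "(\<Sum>e\<in>#E. f e) = 0" using p1(1) by linarith+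
  moreover have "\<forall>e\<in>#E. f e = 0" using add.IH p1(2) \<open>(\<Sum>e\<in>#E. f e) = 0\<close> by blast
  ultimately show ?case by auto
qed

lemma harmonic_zero:
  assumes G: "ttsp V E s t" and ds: "d s = 0"
    and h: "\<forall>u\<in>V - {s}. lapf V E d u = 0"
  shows "\<forall>u\<in>V. d u = 0"
proof -
  note b = ttsp_basic[OF G]
  have "(\<Sum>u\<in>V. d u * lapf V E d u) = 0"
    using h ds by (intro sum.neutral) auto
  then have "(\<Sum>e\<in>#E. snd (snd e) * (d (fst e) - d (fst (snd e)))^2) = 0"
    using lapf_total(2)[of V E d] b by auto
  then have "\<forall>e\<in>#E. snd (snd e) * (d (fst e) - d (fst (snd e)))^2 = 0"
    using b by (intro sum_mset_nonneg_zero) auto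
  then have "\<forall>e\<in>#E. d (fst e) = d (fst (snd e))"
  proof (intro ballI)
    fix e assume z: "\<forall>e\<in>#E. snd (snd e) * (d (fst e) - d (fst (snd e)))^2 = 0" and e: "e \<in># E"
    then have "snd (snd e) > 0" using b by blast
    moreover have "snd (snd e) * (d (fst e) - d (fst (snd e)))^2 = 0" using z e by blast
    ultimately show "d (fst e) = d (fst (snd e))" by simp
  qed
  then have "\<forall>u\<in>V. d u = d s" by (rule ttsp_const[OF G])
  then show ?thesis using ds by simp
qed


definition idx :: "nat list \<Rightarrow> nat \<Rightarrow> nat" where
  "idx vs v = (THE j. j < length vs \<and> vs ! j = v)"

lemma idx_nth: "distinct vs \<Longrightarrow> i < length vs \<Longrightarrow> idx vs (vs ! i) = i"
  unfolding idx_def by (rule the_equality) (auto simp: nth_eq_iff_index_eq)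

lemma idx_in: "distinct vs \<Longrightarrow> v \<in> set vs \<Longrightarrow> idx vs v < length vs \<and> vs ! idx vs v = v"
  by (metis idx_nth in_set_conv_nth)

lemma reindex:
  assumes G: "ttsp V E s t" and ds: "d s = 0"
  shows "lapf V E d u = (\<Sum>j<length (free_verts V s). lap E u (free_verts V s ! j) * d (free_verts V s ! j))"
proof -
  let ?vs = "free_verts V s"
  note b = ttsp_basic[OF G]
  have dist: "distinct ?vs" and set: "set ?vs = V - {s}"
    using b unfolding free_verts_def by auto
  have "lapf V E d u = (\<Sum>v\<in>V - {s}. lap E u v * d v) + lap E u s * d s"
    unfolding lapf_def by (subst sum.remove[of V s]) (use b in auto)
  also have "\<dots> = (\<Sum>v\<in>set ?vs. lap E u v * d v)" using ds set by simp
  also have "\<dots> = (\<Sum>j<length ?vs. lap E u (?vs ! j) * d (?vs ! j))"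
    by (rule sum.reindex_bij_betw[symmetric]) (rule bij_betw_nth[OF dist], auto)
  finally show ?thesis .
qed

lemma key:
  assumes G: "ttsp V E s t"
  shows "H2_sq V E s (ctrl_vec V s t) = eff_res V E s t / 2"
proof -
  define vs where "vs = free_verts V s"
  define m where "m = length vs"
  define A where "A = dirichlet_lap V E s"
  note b = ttsp_basic[OF G]
  have dist: "distinct vs" and set: "set vs = V - {s}"
    using b unfolding free_verts_def vs_def by auto
  have Acar: "A \<in> carrier_mat m m" unfolding A_def dirichlet_lap_def m_def vs_def Let_def by simp
  have Ael: "\<And>i j. i < m \<Longrightarrow> j < m \<Longrightarrow> A $$ (i, j) = lap E (vs ! i) (vs ! j)"
    unfolding A_def dirichlet_lap_def m_def vs_def Let_def by simp
  have rowA: "(A *\<^sub>v y) $ i = lapf V E (\<lambda>v. if v \<in> set vs then y $ idx vs v else 0) (vs ! i)"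
    if y: "y \<in> carrier_vec m" and i: "i < m" for y i
  proof -
    have "lapf V E (\<lambda>v. if v \<in> set vs then y $ idx vs v else 0) (vs ! i)
       = (\<Sum>j<m. lap E (vs ! i) (vs ! j) * (if vs ! j \<in> set vs then y $ idx vs (vs ! j) else 0))"
      unfolding m_def vs_def by (rule reindex[OF G]) (simp add: set[unfolded vs_def])
    also have "\<dots> = (\<Sum>j<m. A $$ (i, j) * y $ j)"
      using i dist Ael idx_nth unfolding m_def by (intro sum.cong) auto
    also have "\<dots> = (A *\<^sub>v y) $ i"
      using Acar y i by (simp add: mult_mat_vec_def scalar_prod_def row_def lessThan_atLeast0)
    finally show ?thesis by simp
  qed
  have det: "det A \<noteq> 0"
  proof
    assume "det A = 0"
    then obtain y where y: "y \<in> carrier_vec m" "y \<noteq> 0\<^sub>v m" "A *\<^sub>v y = 0\<^sub>v m"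
      using det_0_iff_vec_prod_zero_field[OF Acar] by blast
    define d where "d = (\<lambda>v. if v \<in> set vs then y $ idx vs v else 0)"
    have "d s = 0" unfolding d_def using set by auto
    moreover have "\<forall>u\<in>V - {s}. lapf V E d u = 0"
    proof
      fix u assume "u \<in> V - {s}"
      then obtain i where i: "i < m" "u = vs ! i" using set unfolding m_def by (metis in_set_conv_nth)
      have "lapf V E d u = (A *\<^sub>v y) $ i" unfolding d_def i(2) using rowA[OF y(1) i(1)] by simp
      then show "lapf V E d u = 0" using y(3) i(1) by simp
    qed
    ultimately have z: "\<forall>u\<in>V. d u = 0" using harmonic_zero[OF G] by blast
    have "y = 0\<^sub>v m"
    proof (rule eq_vecI)
      fix j assume j: "j < dim_vec (0\<^sub>v m)"
      then have "vs ! j \<in> V" using set m_def by (metis DiffD1 index_zero_vec(2) nth_mem)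
      then have "d (vs ! j) = 0" using z by blast
      then show "y $ j = 0\<^sub>v m $ j" using j dist idx_nth unfolding d_def m_def by auto
    qed (use y in auto)
    with y(2) show False by blast
  qed
  have "A \<in> Units (ring_mat TYPE(real) m ())" by (rule det_non_zero_imp_unit[OF Acar det])
  then have "mat_inverse A \<noteq> None" using mat_inverse(1)[OF Acar, where b="()"] by blast
  then obtain Ai where Ai: "mat_inverse A = Some Ai" by auto
  from mat_inverse(2)[OF Acar Ai] have AAi: "A * Ai = 1\<^sub>m m" and Aicar: "Ai \<in> carrier_mat m m" by auto
  have tin: "t \<in> set vs" using set b by auto
  define k where "k = idx vs t"
  have k: "k < m" "vs ! k = t" using idx_in[OF dist tin] unfolding k_def m_def by auto
  define x where "x = col Ai k"
  have xcar: "x \<in> carrier_vec m" unfolding x_def by (rule col_carrier_vec[OF k(1) Aicar])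
  have Ax: "A *\<^sub>v x = unit_vec m k"
    unfolding x_def using col_mult2[OF Acar Aicar k(1), symmetric] AAi k(1) by simp
  define p where "p = (\<lambda>v. if v \<in> set vs then x $ idx vs v else 0)"
  have ps: "p s = 0" unfolding p_def using set by auto
  have pt: "p t = Ai $$ (k, k)" unfolding p_def x_def k_def using tin k Aicar by (simp add: k_def)
  have lp_free: "lapf V E p u = (if u = t then 1 else 0)" if u: "u \<in> V - {s}" for u
  proof -
    obtain i where i: "i < m" "u = vs ! i" using set u unfolding m_def by (metis in_set_conv_nth)
    have "lapf V E p u = (A *\<^sub>v x) $ i" unfolding p_def i(2) using rowA[OF xcar i(1)] by simp
    also have "\<dots> = (if i = k then 1 else 0)" using Ax i k by simp
    also have "\<dots> = (if u = t then 1 else 0)" using i k dist nth_eq_iff_index_eq unfolding m_def by metis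
    finally show ?thesis .
  qed
  have lp_s: "lapf V E p s = -1"
  proof -
    have "0 = (\<Sum>u\<in>V. lapf V E p u)" using lapf_total(1)[of V E p] b by auto
    also have "\<dots> = lapf V E p s + (\<Sum>u\<in>V - {s}. lapf V E p u)" by (subst sum.remove[of V s]) (use b in auto)
    also have "(\<Sum>u\<in>V - {s}. lapf V E p u) = (\<Sum>u\<in>V - {s}. if u = t then 1 else 0)"
      using lp_free by (intro sum.cong) auto
    also have "\<dots> = 1" using b by simp
    finally show ?thesis by simp
  qed
  define P where "P = (\<lambda>p. (\<forall>u. u \<notin> V \<longrightarrow> p u = 0) \<and> p s = 0 \<and>
                     (\<forall>u\<in>V. (\<Sum>v\<in>V. lap E u v * p v) =
                              (if u = t then 1 else 0) - (if u = s then (1::real) else 0)))"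
  have Pp: "P p"
    unfolding P_def
  proof (intro conjI allI impI ballI)
    fix u assume "u \<notin> V" then show "p u = 0" unfolding p_def using set by auto
  next
    show "p s = 0" by (rule ps)
  next
    fix u assume u: "u \<in> V"
    show "(\<Sum>v\<in>V. lap E u v * p v) = (if u = t then 1 else 0) - (if u = s then 1 else 0)"
    proof (cases "u = s")
      case True then show ?thesis using lp_s b unfolding lapf_def by auto
    next
      case False then show ?thesis using lp_free[of u] u unfolding lapf_def by auto
    qed
  qed
  have uniq: "q = p" if Pq: "P q" for q
  proof -
    define d where "d = (\<lambda>v. q v - p v)"
    have "d s = 0" using Pq Pp unfolding P_def d_def by simp
    moreover have "\<forall>u\<in>V - {s}. lapf V E d u = 0"
    proof
      fix u assume u: "u \<in> V - {s}"
      have "lapf V E d u = lapf V E q u - lapf V E p u"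
        unfolding lapf_def d_def by (simp add: right_diff_distrib sum_subtractf)
      then show "lapf V E d u = 0" using Pq Pp u unfolding P_def lapf_def by auto
    qed
    ultimately have z: "\<forall>u\<in>V. d u = 0" using harmonic_zero[OF G] by blast
    show "q = p"
    proof
      fix v show "q v = p v"
      proof (cases "v \<in> V")
        case True then show ?thesis using z unfolding d_def by auto
      next
        case False then show ?thesis using Pq Pp unfolding P_def by auto
      qed
    qed
  qed
  have "(THE p. P p) = p" using Pp uniq by (rule the_equality)
  then have eff: "eff_res V E s t = Ai $$ (k, k)"
    unfolding eff_res_def P_def[symmetric] Let_def using ps pt by simp
  define B where "B = ctrl_vec V s t"
  have Bcar: "B \<in> carrier_mat m 1" unfolding B_def ctrl_vec_def m_def vs_def Let_def by simp
  have Bel: "\<And>j. j < m \<Longrightarrow> B $$ (j, 0) = (if j = k then 1 else 0)"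
  proof -
    fix j assume j: "j < m"
    have "(vs ! j = t) = (j = k)" using j k dist nth_eq_iff_index_eq unfolding m_def by metis
    then show "B $$ (j, 0) = (if j = k then 1 else 0)"
      unfolding B_def ctrl_vec_def Let_def vs_def[symmetric] using j unfolding m_def by simp
  qed
  have c2: "(transpose_mat B * Ai * B) $$ (0, 0) = Ai $$ (k, k)"
  proof -
    have "(transpose_mat B * Ai * B) $$ (0, 0) = (\<Sum>i = 0..<m. B $$ (i, 0) * (\<Sum>j = 0..<m. Ai $$ (i, j) * B $$ (j, 0)))"
      using Bcar Aicar by (simp add: scalar_prod_def)
    also have "\<dots> = (\<Sum>i = 0..<m. B $$ (i, 0) * Ai $$ (i, k))"
    proof (intro sum.cong refl)
      fix i assume "i \<in> {0..<m}"
      have "(\<Sum>j = 0..<m. Ai $$ (i, j) * B $$ (j, 0)) = (\<Sum>j = 0..<m. if j = k then Ai $$ (i, k) else 0)"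
        using Bel by (intro sum.cong) auto
      also have "\<dots> = Ai $$ (i, k)" using k by simp
      finally show "B $$ (i, 0) * (\<Sum>j = 0..<m. Ai $$ (i, j) * B $$ (j, 0)) = B $$ (i, 0) * Ai $$ (i, k)" by simp
    qed
    also have "\<dots> = (\<Sum>i = 0..<m. if i = k then Ai $$ (k, k) else 0)"
      using Bel by (intro sum.cong) auto
    also have "\<dots> = Ai $$ (k, k)" using k by simp
    finally show ?thesis .
  qed
  have "H2_sq V E s B = 1 / 2 * Ai $$ (k, k)"
    unfolding H2_sq_def A_def[symmetric] Ai mat_trace_def using Bcar Aicar c2 by simp
  then show ?thesis unfolding B_def eff by simp
qed

theorem lemma5:
  fixes V1 :: "nat set" and E1 :: "wedge multiset" and s1 t1 :: nat
    and s2 t2 :: nat and c :: real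
  assumes G1: "ttsp V1 E1 s1 t1"
    and G2: "s2 \<noteq> t2" "c > 0"
    and eq: "eff_res V1 E1 s1 t1 = eff_res {s2, t2} {#(s2, t2, c)#} s2 t2"
  shows "H2_sq V1 E1 s1 (ctrl_vec V1 s1 t1)
       = H2_sq {s2, t2} {#(s2, t2, c)#} s2 (ctrl_vec {s2, t2} s2 t2)"
  using key[OF G1] key[OF ttsp.edge[OF G2]] eq by simp

end
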